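(* Let $\mathbf p$ be a strict–weak assignment and $\lambda/\mu$ a skew shape. There exists a labeling $\theta_{\mathbf p}:\lambda/\mu\to\mathbb P$ (an injection) such that a cover $s\lessdot t$ of $\lambda/\mu$ is a descent of $\theta_{\mathbf p}$ if and only if $O_{\mathbf p}(s\lessdot t)=\mathrm{strict}$. Consequently $s^{\mathbf p}_{\lambda/\mu}=K_{\lambda/\mu,\theta_{\mathbf p}}$.
   Context: A strict–weak assignment is $\mathbf p=(p_i)_{i\in\mathbb Z}$, $p_i\in\{\mathrm{weak},\mathrm{strict}\}$, with $\overline{\mathrm{weak}}=\mathrm{strict}$ and vice versa. The poset $\mathbb N^2$ (cell $(i,j)$ in row $i$, column $j$) has covers $(i,j)\gtrdot(i-1,j)$ and $(i,j)\gtrdot(i,j-1)$; set $O_{\mathbf p}((i,j)\gtrdot(i-1,j))=\overline{p_{j-i+1}}$ and $O_{\mathbf p}((i,j)\gtrdot(i,j-1))=p_{j-i}$. A skew shape $\lambda/\mu=\{(i,j):\mu_i<j\le\lambda_i\}$ for partitions $\mu\subseteq\lambda$ is viewed as an induced subposet of $\mathbb N^2$. A wave $\mathbf p$-tableau of shape $\lambda/\mu$ is $T:\lambda/\mu\to\mathbb P$ with $T(s)<T(t)$ for covers $s\lessdot t$ labeled strict and $T(s)\le T(t)$ for covers labeled weak; $s^{\mathbf p}_{\lambda/\mu}=\sum_T\prod_ix_i^{\#T^{-1}(i)}$. For a labeling (injection) $\theta:P\to\mathbb P$ of a finite poset, a cover $s\lessdot t$ is a descent if $\theta(s)>\theta(t)$;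 a $(P,\theta)$-partition is $\sigma:P\to\mathbb P$ with $\sigma(s)\le\sigma(t)$ on non-descent covers and $\sigma(s)<\sigma(t)$ on descent covers; $K_{P,\theta}=\sum_\sigma\prod_i x_i^{\#\sigma^{-1}(i)}$. *)

theory Defs
  imports Main
begin

datatype sw = Weak | Strict

fun swbar :: "sw \<Rightarrow> sw" where
  "swbar Weak = Strict" | "swbar Strict = Weak"

text \<open>Cells of N^2 are pairs (row, column); rows and columns start at 1.
  The order of N^2 is the componentwise order (generated by the covers
  (i,j) covers (i-1,j) and (i,j) covers (i,j-1)).\<close>

definition cell_le :: "nat \<times> nat \<Rightarrow> nat \<times> nat \<Rightarrow> bool" where
  "cell_le s t \<longleftrightarrow> fst s \<le> fst t \<and> snd s \<le> snd t"

definition cell_lt :: "nat \<times> nat \<Rightarrow> nat \<times> nat \<Rightarrow> bool" where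
  "cell_lt s t \<longleftrightarrow> cell_le s t \<and> s \<noteq> t"

definition covers_in :: "(nat \<times> nat) set \<Rightarrow> nat \<times> nat \<Rightarrow> nat \<times> nat \<Rightarrow> bool" where
  "covers_in P s t \<longleftrightarrow> s \<in> P \<and> t \<in> P \<and> cell_lt s t \<and>
      \<not> (\<exists>u\<in>P. cell_lt s u \<and> cell_lt u t)"

text \<open>A partition: weakly decreasing sequence lambda_1 \<ge> lambda_2 \<ge> ...,
  indexed by positive integers, with finitely many nonzero parts
  (the value at index 0 is irrelevant).\<close>
definition is_partition :: "(nat \<Rightarrow> nat) \<Rightarrow> bool" where
  "is_partition la \<longleftrightarrow> (\<forall>i\<ge>1. la (Suc i) \<le> la i) \<and> finite {i. i \<ge> 1 \<and> la i \<noteq> 0}"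

definition skew_shape :: "(nat \<Rightarrow> nat) \<Rightarrow> (nat \<Rightarrow> nat) \<Rightarrow> (nat \<times> nat) set" where
  "skew_shape la mu = {(i, j). i \<ge> 1 \<and> mu i < j \<and> j \<le> la i}"

definition O_p :: "(int \<Rightarrow> sw) \<Rightarrow> nat \<times> nat \<Rightarrow> nat \<times> nat \<Rightarrow> sw" where
  "O_p p s t = (let i = int (fst t); j = int (snd t) in
     if fst s + 1 = fst t \<and> snd s = snd t then swbar (p (j - i + 1))
     else if fst s = fst t \<and> snd s + 1 = snd t then p (j - i)
     else undefined)"

definition wave_tableau :: "(int \<Rightarrow> sw) \<Rightarrow> (nat \<times> nat) set \<Rightarrow> (nat \<times> nat \<Rightarrow> nat) \<Rightarrow> bool" where
  "wave_tableau p P T \<longleftrightarrow> (\<forall>s\<in>P. T s \<ge> 1) \<and> (\<forall>s. s \<notin> P \<longrightarrow> T s = 0) \<and>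
     (\<forall>s t. covers_in P s t \<longrightarrow>
        (if O_p p s t = Strict then T s < T t else T s \<le> T t))"

definition labeling :: "(nat \<times> nat) set \<Rightarrow> (nat \<times> nat \<Rightarrow> nat) \<Rightarrow> bool" where
  "labeling P th \<longleftrightarrow> inj_on th P \<and> (\<forall>s\<in>P. th s \<ge> 1)"

definition is_descent :: "(nat \<times> nat \<Rightarrow> nat) \<Rightarrow> nat \<times> nat \<Rightarrow> nat \<times> nat \<Rightarrow> bool" where
  "is_descent th s t \<longleftrightarrow> th s > th t"

definition P_partition :: "(nat \<times> nat) set \<Rightarrow> (nat \<times> nat \<Rightarrow> nat) \<Rightarrow> (nat \<times> nat \<Rightarrow> nat) \<Rightarrow> bool" where
  "P_partition P th \<sigma> \<longleftrightarrow> (\<forall>s\<in>P. \<sigma> s \<ge> 1) \<and> (\<forall>s. s \<notin> P \<longrightarrow> \<sigma> s = 0) \<and>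
     (\<forall>s t. covers_in P s t \<longrightarrow>
        (if is_descent th s t then \<sigma> s < \<sigma> t else \<sigma> s \<le> \<sigma> t))"

text \<open>Exponent vector of the monomial prod_i x_i^{#T^{-1}(i)}.\<close>
definition content :: "(nat \<times> nat) set \<Rightarrow> (nat \<times> nat \<Rightarrow> nat) \<Rightarrow> nat \<Rightarrow> nat" where
  "content P T = (\<lambda>k. card {s\<in>P. T s = k})"

text \<open>Equality of the generating functions s^p and K_{P,theta}, coefficientwise.\<close>
definition wave_coeff :: "(int \<Rightarrow> sw) \<Rightarrow> (nat \<times> nat) set \<Rightarrow> (nat \<Rightarrow> nat) \<Rightarrow> nat" where
  "wave_coeff p P a = card {T. wave_tableau p P T \<and> content P T = a}"

definition K_coeff :: "(nat \<times> nat) set \<Rightarrow> (nat \<times> nat \<Rightarrow> nat) \<Rightarrow> (nat \<Rightarrow> nat) \<Rightarrow> nat" where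
  "K_coeff P th a = card {\<sigma>. P_partition P th \<sigma> \<and> content P \<sigma> = a}"

end

theory Submission
  imports Defs "HOL-Library.Product_Lexorder"
begin

definition stp :: "(int \<Rightarrow> sw) \<Rightarrow> int \<Rightarrow> int" where
  "stp p k = (if p k = Strict then -1 else 1)"

definition rk :: "(int \<Rightarrow> sw) \<Rightarrow> int \<Rightarrow> int" where
  "rk p d = (\<Sum>k\<in>{1..d}. stp p k) - (\<Sum>k\<in>{d+1..0}. stp p k)"

lemma rk_step: "rk p (d+1) = rk p d + stp p (d+1)"
proof (cases "d \<ge> 0")
  case True
  have "{1..d+1} = insert (d+1) {1..d}" using True by auto
  moreover have "{d+1+1..0} = ({}::int set)" "{d+1..0} = ({}::int set)" using True by auto
  ultimately show ?thesis unfolding rk_def by simp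
next
  case False
  have "{1..d+1} = ({}::int set)" "{1..d} = ({}::int set)" using False by auto
  moreover have "{d+1..0} = insert (d+1) {d+1+1..0}" using False by auto
  ultimately show ?thesis unfolding rk_def by simp
qed

lemma part_mono: assumes "is_partition la" "1 \<le> i" "i \<le> k" shows "la k \<le> la i"
  using assms(3)
proof (induction k)
  case 0 then show ?case by simp
next
  case (Suc n)
  show ?case
  proof (cases "i = Suc n")
    case False
    then have "i \<le> n" using Suc.prems by auto
    then show ?thesis using Suc.IH assms(1,2) unfolding is_partition_def
      by (meson le_trans)
  qed simp
qed

lemma covers_adj:
  assumes "is_partition la" "is_partition mu" "covers_in (skew_shape la mu) s t"
  shows "(fst s + 1 = fst t \<and> snd s = snd t) \<or> (fst s = fst t \<and> snd s + 1 = snd t)"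
proof -
  obtain a b c e where st: "s = (a,b)" "t = (c,e)" by (cases s, cases t) auto
  let ?P = "skew_shape la mu"
  have conv: "u \<in> ?P" if "cell_le s u" "cell_le u t" for u
  proof -
    obtain x y where u: "u = (x,y)" by (cases u)
    have sP: "1 \<le> a" "mu a < b" and tP: "e \<le> la c"
      using assms(3) st unfolding covers_in_def skew_shape_def by auto
    have "a \<le> x" "b \<le> y" "x \<le> c" "y \<le> e" using that st u unfolding cell_le_def by auto
    then have "mu x \<le> mu a" "la c \<le> la x" using part_mono[OF assms(1)] part_mono[OF assms(2)] sP
      by auto
    then show ?thesis using sP tP \<open>a \<le> x\<close> \<open>b \<le> y\<close> \<open>y \<le> e\<close> u unfolding skew_shape_def by auto
  qed
  have lt: "a \<le> c" "b \<le> e" "(a,b) \<noteq> (c,e)" using assms(3) st unfolding covers_in_def cell_lt_def cell_le_def by auto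
  have nob: "\<not> (\<exists>u\<in>?P. cell_lt s u \<and> cell_lt u t)" using assms(3) unfolding covers_in_def by auto
  show ?thesis
  proof (rule ccontr)
    assume na: "\<not> ?thesis"
    show False
    proof (cases "a < c")
      case True
      let ?u = "(a+1, b)"
      have "cell_lt s ?u" "cell_lt ?u t" using True lt na st unfolding cell_lt_def cell_le_def by auto
      then show False using nob conv unfolding cell_lt_def by blast
    next
      case False
      let ?u = "(a, b+1)"
      have "cell_lt s ?u" "cell_lt ?u t" using False lt na st unfolding cell_lt_def cell_le_def by auto
      then show False using nob conv unfolding cell_lt_def by blast
    qed
  qed
qed

lemma shape_finite:
  assumes "is_partition la"
  shows "finite (skew_shape la mu)"
proof -
  obtain B where B: "\<forall>i\<in>{i. i \<ge> 1 \<and> la i \<noteq> 0}. i \<le> B"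
    using assms unfolding is_partition_def using finite_nat_set_iff_bounded_le by blast
  have "skew_shape la mu \<subseteq> {0..B} \<times> {0..la 1}"
  proof
    fix x assume "x \<in> skew_shape la mu"
    then obtain i j where x: "x = (i,j)" "1 \<le> i" "mu i < j" "j \<le> la i" unfolding skew_shape_def by auto
    then have "la i \<noteq> 0" by auto
    then have "i \<le> B" using B x by auto
    moreover have "la i \<le> la 1" using part_mono[OF assms, of 1 i] x by auto
    ultimately show "x \<in> {0..B} \<times> {0..la 1}" using x by auto
  qed
  then show ?thesis by (rule finite_subset) auto
qed

definition key :: "(int \<Rightarrow> sw) \<Rightarrow> nat \<times> nat \<Rightarrow> int \<times> nat \<times> nat" where
  "key p s = (rk p (int (snd s) - int (fst s)), fst s, snd s)"

definition theta :: "(int \<Rightarrow> sw) \<Rightarrow> (nat \<times> nat) set \<Rightarrow> nat \<times> nat \<Rightarrow> nat" where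
  "theta p P s = card {t\<in>P. key p t < key p s} + 1"

lemma theta_mono:
  assumes "finite P" "s \<in> P" "key p s < key p t"
  shows "theta p P s < theta p P t"
proof -
  have "{u\<in>P. key p u < key p s} \<subset> {u\<in>P. key p u < key p t}"
    using assms by auto
  then show ?thesis unfolding theta_def using assms(1) by (simp add: psubset_card_mono)
qed

lemma key_inj: "key p s = key p t \<Longrightarrow> s = t"
  unfolding key_def by (cases s, cases t) auto

lemma theta_less_iff:
  assumes "finite P" "s \<in> P" "t \<in> P"
  shows "theta p P s < theta p P t \<longleftrightarrow> key p s < key p t"
proof
  assume a: "theta p P s < theta p P t"
  show "key p s < key p t"
  proof (rule ccontr)
    assume "\<not> key p s < key p t"
    then have "key p t < key p s \<or> key p t = key p s" by auto
    then show False
    proof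
      assume "key p t < key p s" then show False using theta_mono[OF assms(1,3)] a by fastforce
    next
      assume "key p t = key p s" then show False using key_inj a by blast
    qed
  qed
qed (rule theta_mono[OF assms(1,2)])

theorem proposition6p2:
  fixes p :: "int \<Rightarrow> sw" and la mu :: "nat \<Rightarrow> nat"
  assumes "is_partition la" and "is_partition mu" and "\<forall>i. mu i \<le> la i"
  shows "\<exists>th. labeling (skew_shape la mu) th \<and>
           (\<forall>s t. covers_in (skew_shape la mu) s t \<longrightarrow>
              (is_descent th s t \<longleftrightarrow> O_p p s t = Strict)) \<and>
           (\<forall>a. wave_coeff p (skew_shape la mu) a = K_coeff (skew_shape la mu) th a)"
proof -
  let ?P = "skew_shape la mu"
  let ?th = "theta p ?P"
  have fin: "finite ?P" by (rule shape_finite[OF assms(1)])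
  have lab: "labeling ?P ?th"
    unfolding labeling_def
  proof
    show "inj_on ?th ?P"
    proof (rule inj_onI)
      fix s t assume "s \<in> ?P" "t \<in> ?P" "?th s = ?th t"
      then show "s = t" using theta_less_iff[OF fin] key_inj
        by (metis less_irrefl neqE)
    qed
  qed (simp add: theta_def)
  have desc: "\<forall>s t. covers_in ?P s t \<longrightarrow> (is_descent ?th s t \<longleftrightarrow> O_p p s t = Strict)"
  proof (intro allI impI)
    fix s t assume c: "covers_in ?P s t"
    have sP: "s \<in> ?P" "t \<in> ?P" using c unfolding covers_in_def by auto
    have d: "is_descent ?th s t \<longleftrightarrow> key p t < key p s"
      unfolding is_descent_def using theta_less_iff[OF fin sP(2) sP(1)] .
    obtain a b c' e where st: "s = (a,b)" "t = (c',e)" by (cases s, cases t) auto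
    from covers_adj[OF assms(1,2) c] st
    have "(c' = a + 1 \<and> e = b) \<or> (c' = a \<and> e = b + 1)" by auto
    then show "is_descent ?th s t \<longleftrightarrow> O_p p s t = Strict"
    proof
      assume h: "c' = a + 1 \<and> e = b"
      have eq: "int b - int a = (int e - int c') + 1" using h by auto
      have "rk p (int b - int a) = rk p (int e - int c') + stp p (int e - int c' + 1)"
        using eq rk_step by simp
      moreover have "O_p p s t = swbar (p (int e - int c' + 1))"
        using h st unfolding O_p_def by (simp add: Let_def)
      ultimately show ?thesis using d st h unfolding key_def stp_def
        by (cases "p (int e - int c' + 1)") auto
    next
      assume h: "c' = a \<and> e = b + 1"
      have eq: "int e - int c' = (int b - int a) + 1" using h by auto
      have "rk p (int e - int c') = rk p (int b - int a) + stp p (int e - int c')"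
        using eq rk_step by simp
      moreover have "O_p p s t = p (int e - int c')"
        using h st unfolding O_p_def by (simp add: Let_def)
      ultimately show ?thesis using d st h unfolding key_def stp_def
        by (cases "p (int e - int c')") auto
    qed
  qed
  have "\<forall>T. wave_tableau p ?P T \<longleftrightarrow> P_partition ?P ?th T"
    unfolding wave_tableau_def P_partition_def using desc by auto
  then have "\<forall>a. wave_coeff p ?P a = K_coeff ?P ?th a"
    unfolding wave_coeff_def K_coeff_def by simp
  then show ?thesis using lab desc by blast
qed

end
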